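(* If $n\ge 3t+1$, then the protocol COOL (core protocol run by all $n$ processors, as described in the context) satisfies termination, consistency and validity in every execution, i.e. it is an error-free Byzantine agreement protocol.
   Context: Setting. $n$ processors indexed by $[1:n]$, pairwise joined by reliable private synchronous channels; recipients know senders. At most $t$ processors are dishonest, controlled by a Byzantine adversary of unbounded computational power knowing all inputs, who may make them deviate arbitrarily (missing values are replaced by a fixed default); the others are honest. Processor $i$ holds an $\ell$-bit initial message $\boldsymbol w_i$. $\phi$ is a default value different from every $\ell$-bit message. Logarithms are base 2. Requirements: termination (every honest processor eventually outputs and terminates), consistency (all honest outputs equal), validity (if all honest processors have the same initial message, they output it). Code. $k=\lfloor t/5\rfloor+1$, $c=\lceil \max\{\ell,(t/5+1)\log(n+1)\}/k\rceil$. Messages are zero-padded to $kc$ bits and viewed in $GF(2^c)^k$. Integers in $[1:n]$ are identified with distinct nonzero elements of $GF(2^c)$; $\boldsymbol h_i\in GF(2^c)^k$ has entries $h_{i,j}=\prod_{p\in[1:k],\,p\ne j}\frac{i-p}{j-p}$ (field arithmetic). COOL (honest processor $i$). Initialization: updated message $\boldsymbol w^{(i)}:=\boldsymbol w_i$, $y^{(i)}_j:=\boldsymbol h_j^{\mathsf T}\boldsymbol w_i$ for $j\in[1:n]$, $u_i(i):=1$. Phase 1. (a) Send $(y^{(i)}_j,y^{(i)}_i)$ to each $j\ne i$. (b) For $j\ne i$, link indicator $u_i(j):=1$ if the pair received from $j$ equals $(y^{(i)}_i,y^{(i)}_j)$, else $0$. Success indicator $s_i:=1$ if $\sum_{j=1}^n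 u_i(j)\ge n-t$; otherwise $s_i:=0$ and $\boldsymbol w^{(i)}:=\phi$. (c) Send $s_i$ to all; each processor records the indicator received from each $j$ (own for itself) and forms $\mathcal S_1=\{j:s_j=1\}$, $\mathcal S_0=\{j:s_j=0\}$ (views may differ). Phase 2. If $s_i=1$: set $u_i(j):=0$ for all $j\in\mathcal S_0$; if now $\sum_j u_i(j)<n-t$, set $s_i:=0$, $\boldsymbol w^{(i)}:=\phi$, and send $s_i=0$ to all. Everyone overwrites recorded indicators with newly received ones and recomputes $\mathcal S_0,\mathcal S_1$. Phase 3. Repeat Phase 2 once more. Vote $v_i:=1$ if the recorded indicators satisfy $\sum_j s_j\ge 2t+1$, else $0$. Run on the votes a deterministic error-free binary Byzantine agreement protocol for $t<n/3$ (e.g. Berman–Garay–Perry or Coan–Welch), which guarantees all honest processors decide, decide equally, and decide the common honest vote when all honest votes agree. If the decision is $0$: set $\boldsymbol w^{(i)}:=\phi$, output $\phi$, stop. Phase 4 (decision 1). If $s_i=0$: replace $y^{(i)}_i$ by the most frequent value (fixed tie-breaking) among the first components of the Phase-1 pairs received from $j\in\mathcal S_1$; send it to each $j\in\mathcal S_0\setminus\{i\}$; with $z_i=y^{(i)}_i$, $z_j$ = value received from $j$ in Phase 4 for $j\in\mathcal S_0\setminus\{i\}$, $z_j$ = second component of the Phase-1 pair from $j$ for $j\in\mathcal S_1$, set $\boldsymbol w^{(i)}$ to a message $\boldsymbol x$ with $\boldsymbol h_j^{\mathsf T}\boldsymbol x=z_j$ for at least $n-t$ indices $j$ ($\phi$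 if none). If $s_i=1$ keep $\boldsymbol w^{(i)}$. Output $\boldsymbol w^{(i)}$ and stop. *)

theory Defs
  imports Complex_Main "HOL-Library.Cardinality"
begin

text \<open>Protocol parameters: number of processors n, fault bound t, message length l,
  the identification alpha of the integers 1..n with distinct nonzero field elements,
  the identification beta of c-bit blocks with field elements, and the fixed
  tie-breaking rule tieb used in Phase 4 (it picks one element of the set of most
  frequent values).\<close>

record 'f cool_params =
  nP    :: nat
  tP    :: nat
  lP    :: nat
  alpha :: "nat \<Rightarrow> 'f"
  beta  :: "bool list \<Rightarrow> 'f"
  tieb  :: "'f set \<Rightarrow> 'f"

text \<open>Everything that is not determined by the honest processors: the set of dishonest
  processors and the values they send (adv1 j i = what j sends to i in Phase 1(a),
  adv1c j i in Phase 1(c), adv2/adv3 j i in Phases 2/3 (None = nothing sent),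
  adv4 j i in Phase 4), and the decisions of the binary Byzantine agreement
  sub-protocol (ba_dec i = decision of processor i).\<close>

record 'f cool_adv =
  bad    :: "nat set"
  adv1   :: "nat \<Rightarrow> nat \<Rightarrow> 'f \<times> 'f"
  adv1c  :: "nat \<Rightarrow> nat \<Rightarrow> bool"
  adv2   :: "nat \<Rightarrow> nat \<Rightarrow> bool option"
  adv3   :: "nat \<Rightarrow> nat \<Rightarrow> bool option"
  adv4   :: "nat \<Rightarrow> nat \<Rightarrow> 'f"
  ba_dec :: "nat \<Rightarrow> bool"

definition procs :: "'f cool_params \<Rightarrow> nat set" where
  "procs P = {1..nP P}"

definition honest :: "'f cool_params \<Rightarrow> 'f cool_adv \<Rightarrow> nat set" where
  "honest P A = procs P - bad A"

definition kk :: "'f cool_params \<Rightarrow> nat" where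
  "kk P = tP P div 5 + 1"

definition cc :: "'f cool_params \<Rightarrow> nat" where
  "cc P = nat \<lceil> max (real (lP P)) ((real (tP P) / 5 + 1) * log 2 (real (nP P) + 1))
                 / real (kk P) \<rceil>"

definition enc :: "'f cool_params \<Rightarrow> bool list \<Rightarrow> nat \<Rightarrow> 'f" where
  "enc P x p = beta P (take (cc P) (drop ((p - 1) * cc P)
                   (x @ replicate (kk P * cc P - length x) False)))"

definition hcoef :: "'f::field cool_params \<Rightarrow> nat \<Rightarrow> nat \<Rightarrow> 'f" where
  "hcoef P i j = (\<Prod>p\<in>{1..kk P} - {j}. (alpha P i - alpha P p) / (alpha P j - alpha P p))"

definition sym :: "'f::field cool_params \<Rightarrow> bool list \<Rightarrow> nat \<Rightarrow> 'f" where
  "sym P x i = (\<Sum>j\<in>{1..kk P}. hcoef P i j * enc P x j)"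

definition cnt :: "'f cool_params \<Rightarrow> (nat \<Rightarrow> bool) \<Rightarrow> nat" where
  "cnt P f = card {j \<in> procs P. f j}"

definition y :: "'f::field cool_params \<Rightarrow> (nat \<Rightarrow> bool list) \<Rightarrow> nat \<Rightarrow> nat \<Rightarrow> 'f" where
  "y P w i j = sym P (w i) j"

definition recv1 :: "'f::field cool_params \<Rightarrow> (nat \<Rightarrow> bool list) \<Rightarrow> 'f cool_adv
                       \<Rightarrow> nat \<Rightarrow> nat \<Rightarrow> 'f \<times> 'f" where
  "recv1 P w A i j = (if j \<in> bad A then adv1 A j i else (y P w j i, y P w j j))"

definition u1 :: "'f::field cool_params \<Rightarrow> (nat \<Rightarrow> bool list) \<Rightarrow> 'f cool_adv
                    \<Rightarrow> nat \<Rightarrow> nat \<Rightarrow> bool" where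
  "u1 P w A i j = (if j = i then True else recv1 P w A i j = (y P w i i, y P w i j))"

definition s1 :: "'f::field cool_params \<Rightarrow> (nat \<Rightarrow> bool list) \<Rightarrow> 'f cool_adv \<Rightarrow> nat \<Rightarrow> bool" where
  "s1 P w A i = (cnt P (u1 P w A i) \<ge> nP P - tP P)"

definition rs1 :: "'f::field cool_params \<Rightarrow> (nat \<Rightarrow> bool list) \<Rightarrow> 'f cool_adv
                     \<Rightarrow> nat \<Rightarrow> nat \<Rightarrow> bool" where
  "rs1 P w A i j = (if j = i then s1 P w A i
                    else if j \<in> bad A then adv1c A j i else s1 P w A j)"

definition u2 :: "'f::field cool_params \<Rightarrow> (nat \<Rightarrow> bool list) \<Rightarrow> 'f cool_adv
                    \<Rightarrow> nat \<Rightarrow> nat \<Rightarrow> bool" where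
  "u2 P w A i j = (if s1 P w A i then u1 P w A i j \<and> rs1 P w A i j else u1 P w A i j)"

definition s2 :: "'f::field cool_params \<Rightarrow> (nat \<Rightarrow> bool list) \<Rightarrow> 'f cool_adv \<Rightarrow> nat \<Rightarrow> bool" where
  "s2 P w A i = (s1 P w A i \<and> cnt P (u2 P w A i) \<ge> nP P - tP P)"

definition msg2 :: "'f::field cool_params \<Rightarrow> (nat \<Rightarrow> bool list) \<Rightarrow> 'f cool_adv
                      \<Rightarrow> nat \<Rightarrow> nat \<Rightarrow> bool option" where
  "msg2 P w A i j = (if j \<in> bad A then adv2 A j i
                     else if s1 P w A j \<and> \<not> s2 P w A j then Some False else None)"

definition rs2 :: "'f::field cool_params \<Rightarrow> (nat \<Rightarrow> bool list) \<Rightarrow> 'f cool_adv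
                     \<Rightarrow> nat \<Rightarrow> nat \<Rightarrow> bool" where
  "rs2 P w A i j = (if j = i then s2 P w A i
                    else case msg2 P w A i j of None \<Rightarrow> rs1 P w A i j | Some b \<Rightarrow> b)"

definition u3 :: "'f::field cool_params \<Rightarrow> (nat \<Rightarrow> bool list) \<Rightarrow> 'f cool_adv
                    \<Rightarrow> nat \<Rightarrow> nat \<Rightarrow> bool" where
  "u3 P w A i j = (if s2 P w A i then u2 P w A i j \<and> rs2 P w A i j else u2 P w A i j)"

definition s3 :: "'f::field cool_params \<Rightarrow> (nat \<Rightarrow> bool list) \<Rightarrow> 'f cool_adv \<Rightarrow> nat \<Rightarrow> bool" where
  "s3 P w A i = (s2 P w A i \<and> cnt P (u3 P w A i) \<ge> nP P - tP P)"

definition msg3 :: "'f::field cool_params \<Rightarrow> (nat \<Rightarrow> bool list) \<Rightarrow> 'f cool_adv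
                      \<Rightarrow> nat \<Rightarrow> nat \<Rightarrow> bool option" where
  "msg3 P w A i j = (if j \<in> bad A then adv3 A j i
                     else if s2 P w A j \<and> \<not> s3 P w A j then Some False else None)"

definition rs3 :: "'f::field cool_params \<Rightarrow> (nat \<Rightarrow> bool list) \<Rightarrow> 'f cool_adv
                     \<Rightarrow> nat \<Rightarrow> nat \<Rightarrow> bool" where
  "rs3 P w A i j = (if j = i then s3 P w A i
                    else case msg3 P w A i j of None \<Rightarrow> rs2 P w A i j | Some b \<Rightarrow> b)"

definition vote :: "'f::field cool_params \<Rightarrow> (nat \<Rightarrow> bool list) \<Rightarrow> 'f cool_adv \<Rightarrow> nat \<Rightarrow> bool" where
  "vote P w A i = (cnt P (rs3 P w A i) \<ge> 2 * tP P + 1)"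

text \<open>Guarantees of the binary Byzantine agreement sub-protocol (run on the votes):
  honest processors decide equally, and decide the common honest vote if all honest
  votes agree.\<close>
definition ba_ok :: "'f::field cool_params \<Rightarrow> (nat \<Rightarrow> bool list) \<Rightarrow> 'f cool_adv \<Rightarrow> bool" where
  "ba_ok P w A \<longleftrightarrow>
     (\<forall>i\<in>honest P A. \<forall>j\<in>honest P A. ba_dec A i = ba_dec A j) \<and>
     (\<forall>b. (\<forall>i\<in>honest P A. vote P w A i = b) \<longrightarrow> (\<forall>i\<in>honest P A. ba_dec A i = b))"

definition S1v :: "'f::field cool_params \<Rightarrow> (nat \<Rightarrow> bool list) \<Rightarrow> 'f cool_adv \<Rightarrow> nat \<Rightarrow> nat set" where
  "S1v P w A i = {j \<in> procs P. rs3 P w A i j}"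

definition freq :: "'f::field cool_params \<Rightarrow> (nat \<Rightarrow> bool list) \<Rightarrow> 'f cool_adv \<Rightarrow> nat \<Rightarrow> 'f \<Rightarrow> nat" where
  "freq P w A i v = card {j \<in> S1v P w A i. fst (recv1 P w A i j) = v}"

definition newy :: "'f::field cool_params \<Rightarrow> (nat \<Rightarrow> bool list) \<Rightarrow> 'f cool_adv \<Rightarrow> nat \<Rightarrow> 'f" where
  "newy P w A i = tieb P {v \<in> (\<lambda>j. fst (recv1 P w A i j)) ` S1v P w A i.
                            \<forall>u. freq P w A i u \<le> freq P w A i v}"

text \<open>Value received by i from j in Phase 4 (an honest j with s_j = 0 sends to every
  member of its S_0 other than itself; a missing value is replaced by the default 0).\<close>
definition recv4 :: "'f::field cool_params \<Rightarrow> (nat \<Rightarrow> bool list) \<Rightarrow> 'f cool_adv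
                       \<Rightarrow> nat \<Rightarrow> nat \<Rightarrow> 'f" where
  "recv4 P w A i j = (if j \<in> bad A then adv4 A j i
                      else if \<not> s3 P w A j \<and> \<not> rs3 P w A j i \<and> i \<noteq> j then newy P w A j else 0)"

definition z :: "'f::field cool_params \<Rightarrow> (nat \<Rightarrow> bool list) \<Rightarrow> 'f cool_adv \<Rightarrow> nat \<Rightarrow> nat \<Rightarrow> 'f" where
  "z P w A i j = (if j = i then newy P w A i
                  else if \<not> rs3 P w A i j then recv4 P w A i j
                  else snd (recv1 P w A i j))"

definition decodable :: "'f::field cool_params \<Rightarrow> (nat \<Rightarrow> bool list) \<Rightarrow> 'f cool_adv
                           \<Rightarrow> nat \<Rightarrow> bool list \<Rightarrow> bool" where
  "decodable P w A i x \<longleftrightarrow> length x = lP P \<and> cnt P (\<lambda>j. sym P x j = z P w A i j) \<ge> nP P - tP P"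

text \<open>Output of honest processor i: None stands for the default value phi.\<close>
definition cool_output :: "'f::field cool_params \<Rightarrow> (nat \<Rightarrow> bool list) \<Rightarrow> 'f cool_adv
                        \<Rightarrow> nat \<Rightarrow> bool list option" where
  "cool_output P w A i =
     (if \<not> ba_dec A i then None
      else if s3 P w A i then Some (w i)
      else if \<exists>x. decodable P w A i x then Some (SOME x. decodable P w A i x)
      else None)"

end

theory Submission
  imports Defs "HOL-Computational_Algebra.Polynomial"
begin

lemma hcoef_delta:
  fixes P :: "'f::field cool_params"
  assumes inj: "inj_on (alpha P) {1..nP P}" and kn: "kk P \<le> nP P"
    and p: "p \<in> {1..kk P}" and p': "p' \<in> {1..kk P}"
  shows "hcoef P p p' = (if p = p' then 1 else 0)"
proof (cases "p = p'")
  case True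
  have "\<And>q. q \<in> {1..kk P} - {p'} \<Longrightarrow> (alpha P p - alpha P q) / (alpha P p' - alpha P q) = 1"
  proof -
    fix q assume q: "q \<in> {1..kk P} - {p'}"
    have "alpha P p' \<noteq> alpha P q"
      using inj q p' kn True by (auto dest: inj_onD)
    then show "(alpha P p - alpha P q) / (alpha P p' - alpha P q) = 1" using True by simp
  qed
  then show ?thesis using True unfolding hcoef_def by simp
next
  case False
  have "p \<in> {1..kk P} - {p'}" using p False by auto
  then have "(\<Prod>q\<in>{1..kk P} - {p'}. (alpha P p - alpha P q) / (alpha P p' - alpha P q)) = 0"
    by (intro prod_zero) auto
  then show ?thesis using False unfolding hcoef_def by simp
qed

definition Lp :: "'f::field cool_params \<Rightarrow> nat \<Rightarrow> 'f poly" where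
  "Lp P p = smult (inverse (\<Prod>q\<in>{1..kk P} - {p}. (alpha P p - alpha P q)))
              (\<Prod>q\<in>{1..kk P} - {p}. [:- alpha P q, 1:])"

definition RSp :: "'f::field cool_params \<Rightarrow> bool list \<Rightarrow> 'f poly" where
  "RSp P c = (\<Sum>p\<in>{1..kk P}. smult (enc P c p) (Lp P p))"

lemma poly_Lp: "poly (Lp P p) (alpha P j) = hcoef P j p"
  unfolding Lp_def hcoef_def prod_dividef by (simp add: poly_prod divide_inverse mult.commute)

lemma poly_RSp: "poly (RSp P c) (alpha P j) = sym P c j"
  unfolding RSp_def sym_def by (simp add: poly_sum poly_Lp mult.commute)

lemma degree_Lp: assumes "p \<in> {1..kk P}" shows "degree (Lp P p) \<le> kk P - 1"
proof -
  have "degree (\<Prod>q\<in>{1..kk P} - {p}. [:- alpha P q, 1:]) \<le> (\<Sum>q\<in>{1..kk P} - {p}. 1)"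
    using degree_prod_sum_le[of "{1..kk P} - {p}" "\<lambda>q. [:- alpha P q, 1:]"] by (simp add: o_def)
  also have "\<dots> \<le> kk P - 1"
    using assms by (simp add: card_Diff_singleton)
  finally show ?thesis unfolding Lp_def using degree_smult_le order_trans by blast
qed

lemma degree_RSp: "degree (RSp P c) \<le> kk P - 1"
  unfolding RSp_def
proof (rule degree_sum_le)
  fix p assume p: "p \<in> {1..kk P}"
  show "degree (smult (enc P c p) (Lp P p)) \<le> kk P - 1"
    using order_trans[OF degree_smult_le degree_Lp[OF p]] .
qed simp

lemma len_bound: "lP P \<le> kk P * cc P"
proof -
  have kpos: "real (kk P) > 0" unfolding kk_def by simp
  let ?M = "max (real (lP P)) ((real (tP P) / 5 + 1) * log 2 (real (nP P) + 1))"
  have "real (lP P) / real (kk P) \<le> ?M / real (kk P)"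
    using kpos by (intro divide_right_mono) auto
  also have "\<dots> \<le> of_int \<lceil>?M / real (kk P)\<rceil>" by (rule le_of_int_ceiling)
  finally have 1: "real (lP P) / real (kk P) \<le> of_int \<lceil>?M / real (kk P)\<rceil>" .
  then have 2: "\<lceil>?M / real (kk P)\<rceil> \<ge> 0"
    by (smt (verit) divide_nonneg_nonneg kpos of_int_less_0_iff of_nat_0_le_iff)
  have "real (cc P) = of_int \<lceil>?M / real (kk P)\<rceil>" unfolding cc_def using 2 by simp
  with 1 have "real (lP P) / real (kk P) \<le> real (cc P)" by simp
  then have "real (lP P) \<le> real (kk P) * real (cc P)" using kpos by (simp add: field_simps)
  then show ?thesis by (metis of_nat_le_iff of_nat_mult)
qed

lemma enc_inj:
  assumes binj: "inj_on (beta P) {xs. length xs = cc P}"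
    and lc: "length c = lP P" and ld: "length d = lP P"
    and eq: "\<forall>p\<in>{1..kk P}. enc P c p = enc P d p"
  shows "c = d"
proof -
  define pc where "pc = c @ replicate (kk P * cc P - lP P) False"
  define pd where "pd = d @ replicate (kk P * cc P - lP P) False"
  have lb: "lP P \<le> kk P * cc P" by (rule len_bound)
  have lpc: "length pc = kk P * cc P" and lpd: "length pd = kk P * cc P"
    using lb lc ld unfolding pc_def pd_def by auto
  have blk: "take (cc P) (drop ((p - 1) * cc P) pc) = take (cc P) (drop ((p - 1) * cc P) pd)"
    if p: "p \<in> {1..kk P}" for p
  proof -
    have le: "(p - 1) * cc P + cc P \<le> kk P * cc P"
    proof -
      have "(p - 1) * cc P + cc P = p * cc P" using p by (cases p) auto
      also have "\<dots> \<le> kk P * cc P" using p by simp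
      finally show ?thesis .
    qed
    have "length (take (cc P) (drop ((p - 1) * cc P) pc)) = cc P"
      using le lpc by simp
    moreover have "length (take (cc P) (drop ((p - 1) * cc P) pd)) = cc P"
      using le lpd by simp
    moreover have "beta P (take (cc P) (drop ((p - 1) * cc P) pc)) = beta P (take (cc P) (drop ((p - 1) * cc P) pd))"
      using eq p unfolding enc_def pc_def pd_def lc ld by auto
    ultimately show ?thesis using binj by (auto dest: inj_onD)
  qed
  have "pc = pd"
  proof (rule nth_equalityI)
    show "length pc = length pd" using lpc lpd by simp
    fix i assume i: "i < length pc"
    then have cpos: "cc P > 0" using lpc by (cases "cc P") auto
    define p where "p = i div cc P + 1"
    define r where "r = i mod cc P"
    have r: "r < cc P" unfolding r_def using cpos by simp
    have ip: "i = (p - 1) * cc P + r" unfolding p_def r_def by simp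
    have "i div cc P < kk P" using i lpc cpos by (simp add: less_mult_imp_div_less)
    then have p: "p \<in> {1..kk P}" unfolding p_def by simp
    have "pc ! i = take (cc P) (drop ((p - 1) * cc P) pc) ! r"
      using r ip i by simp
    also have "\<dots> = take (cc P) (drop ((p - 1) * cc P) pd) ! r" using blk[OF p] by simp
    also have "\<dots> = pd ! i"
    proof -
      have "(p - 1) * cc P \<le> length pd" using ip i lpc lpd by linarith
      then show ?thesis using r ip by (simp add: nth_drop)
    qed
    finally show "pc ! i = pd ! i" .
  qed
  then have "take (lP P) pc = take (lP P) pd" by simp
  then show ?thesis unfolding pc_def pd_def using lc ld by simp
qed

lemma sym_sys:
  fixes P :: "'f::field cool_params"
  assumes inj: "inj_on (alpha P) {1..nP P}" and kn: "kk P \<le> nP P" and p: "p \<in> {1..kk P}"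
  shows "sym P c p = enc P c p"
proof -
  have "sym P c p = (\<Sum>j\<in>{1..kk P}. (if p = j then enc P c j else 0))"
    unfolding sym_def by (intro sum.cong refl) (simp add: hcoef_delta[OF inj kn p])
  also have "\<dots> = enc P c p" using p by (simp add: sum.delta)
  finally show ?thesis .
qed

lemma rs_unique:
  fixes P :: "'f::field cool_params"
  assumes inj: "inj_on (alpha P) {1..nP P}" and kn: "kk P \<le> nP P"
    and binj: "inj_on (beta P) {xs. length xs = cc P}"
    and lc: "length c = lP P" and ld: "length d = lP P"
    and S: "S \<subseteq> {1..nP P}" and cS: "card S \<ge> kk P"
    and agree: "\<forall>j\<in>S. sym P c j = sym P d j"
  shows "c = d"
proof -
  have injS: "inj_on (alpha P) S" using inj S by (rule inj_on_subset)
  have cA: "card (alpha P ` S) = card S" using injS by (rule card_image)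
  have kpos: "kk P > 0" unfolding kk_def by simp
  have "RSp P c = RSp P d"
  proof (rule poly_eqI_degree)
    fix x assume "x \<in> alpha P ` S"
    then obtain j where "j \<in> S" "x = alpha P j" by auto
    then show "poly (RSp P c) x = poly (RSp P d) x" using agree by (simp add: poly_RSp)
  next
    show "degree (RSp P c) < card (alpha P ` S)"
      using degree_RSp[of P c] cA cS kpos by linarith
    show "degree (RSp P d) < card (alpha P ` S)"
      using degree_RSp[of P d] cA cS kpos by linarith
  qed
  then have "\<forall>p\<in>{1..kk P}. enc P c p = enc P d p"
    using poly_RSp[of P c] poly_RSp[of P d] sym_sys[OF inj kn] by metis
  then show ?thesis using enc_inj[OF binj lc ld] by blast
qed



lemma double_count:
  assumes "finite X" "finite Y"
  shows "(\<Sum>x\<in>X. card {y\<in>Y. R x y}) = (\<Sum>y\<in>Y. card {x\<in>X. R x y})"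
proof -
  have 1: "card {y\<in>Y. R x y} = (\<Sum>y\<in>Y. if R x y then 1 else 0)" for x
    using assms(2) by (simp add: sum.inter_filter[symmetric])
  have 2: "card {x\<in>X. R x y} = (\<Sum>x\<in>X. if R x y then 1 else 0)" for y
    using assms(1) by (simp add: sum.inter_filter[symmetric])
  show ?thesis unfolding 1 2 by (rule sum.swap)
qed

locale coolc =
  fixes P :: "'f::field cool_params" and A :: "'f cool_adv" and w :: "nat \<Rightarrow> bool list"
  assumes n_bound: "nP P \<ge> 3 * tP P + 1"
    and alpha_inj: "inj_on (alpha P) {1..nP P}"
    and beta_inj: "inj_on (beta P) {xs. length xs = cc P}"
    and tieb_ok: "\<forall>S. S \<noteq> {} \<longrightarrow> tieb P S \<in> S"
    and bad_sub: "bad A \<subseteq> {1..nP P}"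
    and bad_card: "card (bad A) \<le> tP P"
    and inputs: "\<forall>i\<in>honest P A. length (w i) = lP P"
    and ba: "ba_ok P w A"
begin

abbreviation "H \<equiv> honest P A"
abbreviation "n \<equiv> nP P"
abbreviation "t \<equiv> tP P"
abbreviation "bn \<equiv> card (bad A)"
abbreviation "m \<equiv> tP P div 5"

definition adj :: "nat \<Rightarrow> nat \<Rightarrow> bool" where
  "adj i j \<longleftrightarrow> sym P (w j) i = sym P (w i) i \<and> sym P (w j) j = sym P (w i) j"

lemma kk_m: "kk P = m + 1" unfolding kk_def by simp

lemma kn: "kk P \<le> n" using n_bound unfolding kk_def by simp

lemma Hsub: "H \<subseteq> {1..n}" unfolding honest_def procs_def by auto
lemma finH: "finite H" using Hsub finite_subset by blast
lemma cardH: "card H + bn = n"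
proof -
  have "card H = card {1..n} - bn" unfolding honest_def procs_def
    using bad_sub by (simp add: card_Diff_subset finite_subset)
  moreover have "bn \<le> card {1..n}" using bad_sub by (intro card_mono) auto
  ultimately show ?thesis by simp
qed

lemma H_iff: "j \<in> H \<longleftrightarrow> j \<in> procs P \<and> j \<notin> bad A" unfolding honest_def by auto

lemma agree_card:
  assumes lc: "length c = lP P" and ld: "length d = lP P" and ne: "c \<noteq> d"
    and S: "S \<subseteq> {1..n}" and ag: "\<forall>j\<in>S. sym P c j = sym P d j"
  shows "card S \<le> m"
proof (rule ccontr)
  assume "\<not> card S \<le> m"
  then have "card S \<ge> kk P" using kk_m by simp
  then have "c = d" using rs_unique[OF alpha_inj kn beta_inj lc ld S _ ag] by simp
  with ne show False ..
qed

lemma finbad: "finite (bad A)" using bad_sub finite_subset by blast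

lemma cnt_le: "cnt P f \<le> card {j\<in>H. f j} + bn"
proof -
  have "{j\<in>procs P. f j} \<subseteq> {j\<in>H. f j} \<union> bad A" unfolding honest_def by auto
  then have "cnt P f \<le> card ({j\<in>H. f j} \<union> bad A)" unfolding cnt_def
    using finbad finH by (intro card_mono) (auto simp: procs_def)
  also have "\<dots> \<le> card {j\<in>H. f j} + bn" by (rule card_Un_le)
  finally show ?thesis .
qed

lemma cnt_ge: "card {j\<in>H. f j} \<le> cnt P f"
  unfolding cnt_def by (intro card_mono) (auto simp: procs_def honest_def)

lemma u1_H: "i \<in> H \<Longrightarrow> j \<in> H \<Longrightarrow> u1 P w A i j = adj i j"
  unfolding u1_def recv1_def y_def adj_def H_iff by auto

lemma rs1_H: "i \<in> H \<Longrightarrow> j \<in> H \<Longrightarrow> rs1 P w A i j = s1 P w A j"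
  unfolding rs1_def H_iff by auto

lemma s2_s1: "s2 P w A i \<Longrightarrow> s1 P w A i" unfolding s2_def by simp
lemma s3_s2: "s3 P w A i \<Longrightarrow> s2 P w A i" unfolding s3_def by simp

lemma rs2_H: "i \<in> H \<Longrightarrow> j \<in> H \<Longrightarrow> rs2 P w A i j = s2 P w A j"
  unfolding rs2_def msg2_def using rs1_H[of i j] s2_s1[of j] H_iff by auto

lemma rs3_H: "i \<in> H \<Longrightarrow> j \<in> H \<Longrightarrow> rs3 P w A i j = s3 P w A j"
  unfolding rs3_def msg3_def using rs2_H[of i j] s3_s2[of j] H_iff by auto

lemma u2_H: "i \<in> H \<Longrightarrow> j \<in> H \<Longrightarrow> s1 P w A i \<Longrightarrow> u2 P w A i j = (adj i j \<and> s1 P w A j)"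
  unfolding u2_def using u1_H rs1_H by auto

lemma u3_H: "i \<in> H \<Longrightarrow> j \<in> H \<Longrightarrow> s2 P w A i \<Longrightarrow> u3 P w A i j = (u2 P w A i j \<and> s2 P w A j)"
  unfolding u3_def using rs2_H by auto

lemma s1_card: "i \<in> H \<Longrightarrow> s1 P w A i \<Longrightarrow> card {j\<in>H. adj i j} + bn \<ge> n - t"
proof -
  assume i: "i \<in> H" and s: "s1 P w A i"
  have "cnt P (u1 P w A i) \<ge> n - t" using s unfolding s1_def by simp
  moreover have "{j\<in>H. u1 P w A i j} = {j\<in>H. adj i j}" using u1_H[OF i] by auto
  ultimately show ?thesis using cnt_le[of "u1 P w A i"] by simp
qed

lemma s2_card: "i \<in> H \<Longrightarrow> s2 P w A i \<Longrightarrow> card {j\<in>H. adj i j \<and> s1 P w A j} + bn \<ge> n - t"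
proof -
  assume i: "i \<in> H" and s: "s2 P w A i"
  have "cnt P (u2 P w A i) \<ge> n - t" using s unfolding s2_def by simp
  moreover have "{j\<in>H. u2 P w A i j} = {j\<in>H. adj i j \<and> s1 P w A j}"
    using u2_H[OF i] s2_s1[OF s] by auto
  ultimately show ?thesis using cnt_le[of "u2 P w A i"] by simp
qed

definition D :: "bool list \<Rightarrow> nat set" where
  "D c = {x\<in>H. sym P c x = sym P (w x) x}"

lemma finD: "finite (D c)" unfolding D_def using finH by simp

lemma nbr_D: "i \<in> H \<Longrightarrow> {j\<in>H. adj i j} \<subseteq> D (w i)"
  unfolding D_def adj_def by auto

lemma D_int: assumes "length c = lP P" "length d = lP P" "c \<noteq> d"
  shows "card (D c \<inter> D d) \<le> m"
  by (rule agree_card[OF assms]) (use Hsub in \<open>auto simp: D_def\<close>)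

lemma D_sub: "D c \<subseteq> H" unfolding D_def by auto

lemma s1_D: "i \<in> H \<Longrightarrow> s1 P w A i \<Longrightarrow> card (D (w i)) + bn \<ge> n - t"
  using s1_card[of i] card_mono[OF finD nbr_D[of i]] by linarith

lemma card3: assumes "finite X" "finite Y" "finite Z"
  shows "card X + card Y + card Z \<le> card (X \<union> Y \<union> Z) + card (X \<inter> Y) + card (X \<inter> Z) + card (Y \<inter> Z)"
proof -
  have a: "card (X \<union> (Y \<union> Z)) + card (X \<inter> (Y \<union> Z)) = card X + card (Y \<union> Z)"
    using assms card_Un_Int[of X "Y \<union> Z"] by auto
  have b: "card (Y \<union> Z) + card (Y \<inter> Z) = card Y + card Z"
    using assms card_Un_Int[of Y Z] by auto
  have c: "card (X \<inter> (Y \<union> Z)) \<le> card (X \<inter> Y) + card (X \<inter> Z)"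
    by (metis Int_Un_distrib card_Un_le)
  show ?thesis using a b c by (simp add: Un_assoc)
qed

lemma two_msgs:
  assumes i1: "i1 \<in> H" and i2: "i2 \<in> H" and i3: "i3 \<in> H"
    and s: "s1 P w A i1" "s1 P w A i2" "s1 P w A i3"
    and d: "w i1 \<noteq> w i2" "w i1 \<noteq> w i3" "w i2 \<noteq> w i3"
  shows False
proof -
  let ?D1 = "D (w i1)" and ?D2 = "D (w i2)" and ?D3 = "D (w i3)"
  have l: "length (w i1) = lP P" "length (w i2) = lP P" "length (w i3) = lP P"
    using inputs i1 i2 i3 by auto
  have "card ?D1 + card ?D2 + card ?D3 \<le> card (?D1 \<union> ?D2 \<union> ?D3) + card (?D1 \<inter> ?D2) + card (?D1 \<inter> ?D3) + card (?D2 \<inter> ?D3)"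
    by (intro card3 finD)
  moreover have "card (?D1 \<union> ?D2 \<union> ?D3) \<le> card H"
    using D_sub finH by (intro card_mono) auto
  moreover have "card (?D1 \<inter> ?D2) \<le> m" "card (?D1 \<inter> ?D3) \<le> m" "card (?D2 \<inter> ?D3) \<le> m"
    using D_int l d by auto
  moreover have "card ?D1 + bn \<ge> n - t" "card ?D2 + bn \<ge> n - t" "card ?D3 + bn \<ge> n - t"
    using s1_D i1 i2 i3 s by auto
  moreover have "m * 5 \<le> t" by simp
  ultimately show False using cardH n_bound bad_card by linarith
qed


lemma side:
  assumes i1: "i1 \<in> H" and i2: "i2 \<in> H" and s2: "s2 P w A i1" and ne: "w i1 \<noteq> w i2"
    and only2: "\<forall>j\<in>H. s1 P w A j \<longrightarrow> w j = w i1 \<or> w j = w i2"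
  shows "\<exists>pA. pA + 2*m + bn \<ge> n - t \<and>
     pA * (n - t - bn - card {x\<in>H. w x = w i1}) \<le> card {x\<in>H. w x \<noteq> w i1 \<and> w x \<noteq> w i2} * m"
proof -
  define a where "a = w i1"
  define bb where "bb = w i2"
  define Ga where "Ga = {x\<in>H. w x = a}"
  define Os where "Os = {x\<in>H. w x \<noteq> a \<and> w x \<noteq> bb}"
  define Z where "Z = {x\<in>{1..n}. sym P a x = sym P bb x}"
  define S1a where "S1a = {x\<in>Ga. s1 P w A x}"
  define Pa where "Pa = S1a - Z"
  have la: "length a = lP P" and lb: "length bb = lP P" using inputs i1 i2 a_def bb_def by auto
  have neab: "a \<noteq> bb" using ne a_def bb_def by simp
  have cZ: "card Z \<le> m" unfolding Z_def by (rule agree_card[OF la lb neab]) auto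
  have finZ: "finite Z" unfolding Z_def by simp
  have finGa: "finite Ga" unfolding Ga_def using finH by simp
  have finOs: "finite Os" unfolding Os_def using finH by simp
  have finS1a: "finite S1a" unfolding S1a_def using finGa by simp
  have finPa: "finite Pa" unfolding Pa_def using finS1a by simp
  have "{j\<in>H. adj i1 j \<and> s1 P w A j} \<subseteq> S1a \<union> Z"
  proof
    fix j assume j: "j \<in> {j\<in>H. adj i1 j \<and> s1 P w A j}"
    then have "w j = a \<or> w j = bb" using only2 a_def bb_def by auto
    moreover have "j \<in> {1..n}" using j Hsub by auto
    moreover have "sym P (w j) j = sym P a j" using j unfolding adj_def a_def by auto
    ultimately show "j \<in> S1a \<union> Z" using j unfolding S1a_def Ga_def Z_def by auto
  qed
  then have "card {j\<in>H. adj i1 j \<and> s1 P w A j} \<le> card (S1a \<union> Z)"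
    by (rule card_mono[rotated]) (use finS1a finZ in auto)
  also have "\<dots> \<le> card S1a + card Z" by (rule card_Un_le)
  finally have "card {j\<in>H. adj i1 j \<and> s1 P w A j} \<le> card S1a + card Z" .
  then have c1: "card S1a + m + bn \<ge> n - t" using s2_card[OF i1 s2] cZ by linarith
  have "card S1a - card Z \<le> card Pa" unfolding Pa_def by (rule diff_card_le_card_Diff[OF finZ])
  then have cPa: "card Pa + 2*m + bn \<ge> n - t" using c1 cZ by linarith
  have lowy: "n - t - bn - card Ga \<le> card {j\<in>Os. adj y j}" if y: "y \<in> Pa" for y
  proof -
    have yH: "y \<in> H" and yS1: "s1 P w A y" and ya: "w y = a" and yZ: "y \<notin> Z"
      using y unfolding Pa_def S1a_def Ga_def by auto
    have "{j\<in>H. adj y j} \<subseteq> Ga \<union> {j\<in>Os. adj y j}"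
    proof
      fix j assume j: "j \<in> {j\<in>H. adj y j}"
      have "w j \<noteq> bb"
      proof
        assume "w j = bb"
        then have "sym P bb y = sym P a y" using j ya unfolding adj_def by auto
        then have "y \<in> Z" using yH Hsub unfolding Z_def by auto
        with yZ show False ..
      qed
      then show "j \<in> Ga \<union> {j\<in>Os. adj y j}" using j unfolding Ga_def Os_def by auto
    qed
    then have "card {j\<in>H. adj y j} \<le> card (Ga \<union> {j\<in>Os. adj y j})"
      by (rule card_mono[rotated]) (use finGa finOs in auto)
    also have "\<dots> \<le> card Ga + card {j\<in>Os. adj y j}" by (rule card_Un_le)
    finally have "card {j\<in>H. adj y j} \<le> card Ga + card {j\<in>Os. adj y j}" .
    then show ?thesis using s1_card[OF yH yS1] by linarith
  qed
  have upx: "card {y\<in>Pa. adj y x} \<le> m" if x: "x \<in> Os" for x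
  proof -
    have xH: "x \<in> H" and xa: "w x \<noteq> a" using x unfolding Os_def by auto
    have lx: "length (w x) = lP P" using inputs xH by auto
    show ?thesis
    proof (rule agree_card[OF lx la xa, of "{y\<in>Pa. adj y x}"])
      show "{y \<in> Pa. adj y x} \<subseteq> {1..n}" using Hsub unfolding Pa_def S1a_def Ga_def by auto
      show "\<forall>j\<in>{y \<in> Pa. adj y x}. sym P (w x) j = sym P a j"
        unfolding adj_def Pa_def S1a_def Ga_def by auto
    qed
  qed
  have "card Pa * (n - t - bn - card Ga) = (\<Sum>y\<in>Pa. (n - t - bn - card Ga))" by simp
  also have "\<dots> \<le> (\<Sum>y\<in>Pa. card {j\<in>Os. adj y j})" by (intro sum_mono lowy)
  also have "\<dots> = (\<Sum>x\<in>Os. card {y\<in>Pa. adj y x})" by (rule double_count[OF finPa finOs])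
  also have "\<dots> \<le> card Os * m" using sum_bounded_above[of Os "\<lambda>x. card {y\<in>Pa. adj y x}" m] upx by simp
  finally have "card Pa * (n - t - bn - card Ga) \<le> card Os * m" .
  then show ?thesis using cPa unfolding Ga_def Os_def a_def bb_def by blast
qed

lemma arith_core:
  fixes pA pB gA gB oo b n t m N :: nat
  assumes "pA + 2*m + b \<ge> N" "pB + 2*m + b \<ge> N"
    and hA: "pA * (N - b - gA) \<le> oo * m" and hB: "pB * (N - b - gB) \<le> oo * m"
    and "gA + gB + oo + b = n" "N = n - t" "n \<ge> 3*t+1" "b \<le> t" "m * 5 \<le> t"
  shows False
proof -
  define XA where "XA = N - b - gA"
  define XB where "XB = N - b - gB"
  have Nt: "N + t = n" using assms(6,7) by simp
  have pa: "pA \<ge> 2*m+1" "pB \<ge> 2*m+1" using assms(1,2,8,9) Nt assms(7) by linarith+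
  have xa: "XA + b + gA \<ge> N" "XB + b + gB \<ge> N" unfolding XA_def XB_def by simp_all
  have X: "XA + XB \<ge> oo + 1" using xa Nt assms(5,7,8) by linarith
  have "(2*m+1) * XA \<le> pA * XA" using pa by (intro mult_right_mono) auto
  moreover have "(2*m+1) * XB \<le> pB * XB" using pa by (intro mult_right_mono) auto
  moreover have "(2*m+1) * (oo+1) \<le> (2*m+1) * (XA + XB)" using X by (intro mult_left_mono) auto
  ultimately have "(2*m+1) * (oo+1) \<le> 2 * (oo * m)" using hA hB unfolding XA_def[symmetric] XB_def[symmetric]
    by (simp add: algebra_simps)
  then show False by (simp add: algebra_simps)
qed

end

context coolc begin
lemma core:
  assumes i1: "i1 \<in> H" and i2: "i2 \<in> H" and s: "s2 P w A i1" "s2 P w A i2"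
  shows "w i1 = w i2"
proof (rule ccontr)
  assume ne: "w i1 \<noteq> w i2"
  have only2: "\<forall>j\<in>H. s1 P w A j \<longrightarrow> w j = w i1 \<or> w j = w i2"
  proof (intro ballI impI)
    fix j assume jH: "j \<in> H" and sj: "s1 P w A j"
    show "w j = w i1 \<or> w j = w i2"
      using two_msgs[OF i1 i2 jH s2_s1[OF s(1)] s2_s1[OF s(2)] sj ne] by metis
  qed
  obtain pA where A1: "pA + 2*m + bn \<ge> n - t"
    and A2: "pA * (n - t - bn - card {x\<in>H. w x = w i1}) \<le> card {x\<in>H. w x \<noteq> w i1 \<and> w x \<noteq> w i2} * m"
    using side[OF i1 i2 s(1) ne only2] by blast
  obtain pB where B1: "pB + 2*m + bn \<ge> n - t"
    and B2: "pB * (n - t - bn - card {x\<in>H. w x = w i2}) \<le> card {x\<in>H. w x \<noteq> w i2 \<and> w x \<noteq> w i1} * m"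
    using side[OF i2 i1 s(2) ne[symmetric]] only2 by blast
  have eqO: "{x\<in>H. w x \<noteq> w i2 \<and> w x \<noteq> w i1} = {x\<in>H. w x \<noteq> w i1 \<and> w x \<noteq> w i2}" by auto
  have part: "card {x\<in>H. w x = w i1} + card {x\<in>H. w x = w i2} + card {x\<in>H. w x \<noteq> w i1 \<and> w x \<noteq> w i2} = card H"
  proof -
    have "card {x\<in>H. w x = w i1} + card {x\<in>H. w x = w i2} = card ({x\<in>H. w x = w i1} \<union> {x\<in>H. w x = w i2})"
      using ne finH by (intro card_Un_disjoint[symmetric]) auto
    moreover have "card ({x\<in>H. w x = w i1} \<union> {x\<in>H. w x = w i2}) + card {x\<in>H. w x \<noteq> w i1 \<and> w x \<noteq> w i2} = card H"
    proof -
      have "card (({x\<in>H. w x = w i1} \<union> {x\<in>H. w x = w i2}) \<union> {x\<in>H. w x \<noteq> w i1 \<and> w x \<noteq> w i2}) =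
            card ({x\<in>H. w x = w i1} \<union> {x\<in>H. w x = w i2}) + card {x\<in>H. w x \<noteq> w i1 \<and> w x \<noteq> w i2}"
        using finH by (intro card_Un_disjoint) auto
      moreover have "({x\<in>H. w x = w i1} \<union> {x\<in>H. w x = w i2}) \<union> {x\<in>H. w x \<noteq> w i1 \<and> w x \<noteq> w i2} = H" by auto
      ultimately show ?thesis by simp
    qed
    ultimately show ?thesis by simp
  qed
  have B2': "pB * (n - t - bn - card {x\<in>H. w x = w i2}) \<le> card {x\<in>H. w x \<noteq> w i1 \<and> w x \<noteq> w i2} * m"
    using B2 unfolding eqO .
  have part': "card {x\<in>H. w x = w i1} + card {x\<in>H. w x = w i2} + card {x\<in>H. w x \<noteq> w i1 \<and> w x \<noteq> w i2} + bn = n"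
    using part cardH by simp
  have m5: "m * 5 \<le> t" by simp
  show False by (rule arith_core[OF A1 B1 A2 B2' part' refl n_bound bad_card m5])
qed


lemma vote_T3: "i \<in> H \<Longrightarrow> vote P w A i \<Longrightarrow> card {j\<in>H. s3 P w A j} + bn \<ge> 2*t+1"
proof -
  assume i: "i \<in> H" and v: "vote P w A i"
  have "{j\<in>H. rs3 P w A i j} = {j\<in>H. s3 P w A j}" using rs3_H[OF i] by auto
  then show ?thesis using v cnt_le[of "rs3 P w A i"] unfolding vote_def by simp
qed

lemma procs_fin: "finite (procs P)" unfolding procs_def by simp
lemma H_procs: "H \<subseteq> procs P" unfolding honest_def by auto

lemma newy_ok:
  assumes i: "i \<in> H" and ni: "\<not> s3 P w A i" and i0: "i0 \<in> H" "s3 P w A i0"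
    and big: "card {j\<in>H. s3 P w A j} \<ge> bn + 1"
  shows "newy P w A i = sym P (w i0) i"
proof -
  define T where "T = {j\<in>H. s3 P w A j}"
  define val where "val = sym P (w i0) i"
  define f where "f = (\<lambda>j. fst (recv1 P w A i j))"
  have finS: "finite (S1v P w A i)" unfolding S1v_def using procs_fin by simp
  have fj: "j \<in> S1v P w A i \<and> f j = val" if j: "j \<in> T" for j
  proof -
    have jH: "j \<in> H" and sj: "s3 P w A j" using j unfolding T_def by auto
    have "w j = w i0" using core[OF jH i0(1) s3_s2[OF sj] s3_s2[OF i0(2)]] .
    moreover have "j \<notin> bad A" using jH H_iff by auto
    ultimately have "f j = val" unfolding f_def recv1_def y_def val_def by simp
    moreover have "j \<in> S1v P w A i" unfolding S1v_def using jH H_procs rs3_H[OF i jH] sj by auto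
    ultimately show ?thesis by simp
  qed
  have freq_f: "freq P w A i u = card {j\<in>S1v P w A i. f j = u}" for u
    unfolding freq_def f_def by simp
  have fv: "card T \<le> freq P w A i val"
    unfolding freq_f using fj finS by (intro card_mono) auto
  have fo: "freq P w A i u \<le> bn" if u: "u \<noteq> val" for u
  proof -
    have "{j\<in>S1v P w A i. f j = u} \<subseteq> bad A"
    proof
      fix j assume j: "j \<in> {j\<in>S1v P w A i. f j = u}"
      show "j \<in> bad A"
      proof (rule ccontr)
        assume "j \<notin> bad A"
        then have jH: "j \<in> H" using j H_iff unfolding S1v_def by auto
        then have "j \<in> T" using j rs3_H[OF i jH] unfolding S1v_def T_def by auto
        then have "f j = val" using fj by blast
        with j u show False by auto
      qed
    qed
    then show ?thesis unfolding freq_f using finbad by (intro card_mono) auto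
  qed
  define M where "M = {v \<in> f ` S1v P w A i. \<forall>u. freq P w A i u \<le> freq P w A i v}"
  have i0T: "i0 \<in> T" unfolding T_def using i0 by simp
  have cT: "card T \<ge> bn + 1" using big unfolding T_def .
  have "val \<in> M"
  proof -
    have "val \<in> f ` S1v P w A i" using fj[OF i0T] by force
    moreover have "freq P w A i u \<le> freq P w A i val" for u
    proof (cases "u = val")
      case False then show ?thesis using fo[OF False] fv cT by linarith
    qed simp
    ultimately show ?thesis unfolding M_def by blast
  qed
  then have tm: "tieb P M \<in> M" using tieb_ok by blast
  have "tieb P M = val"
  proof (rule ccontr)
    assume ne: "tieb P M \<noteq> val"
    have "freq P w A i val \<le> freq P w A i (tieb P M)" using tm unfolding M_def by blast
    then show False using fo[OF ne] fv cT by linarith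
  qed
  moreover have "newy P w A i = tieb P M" unfolding newy_def M_def f_def ..
  ultimately show ?thesis unfolding val_def by simp
qed

lemma z_ok:
  assumes i: "i \<in> H" and ni: "\<not> s3 P w A i" and j: "j \<in> H" and i0: "i0 \<in> H" "s3 P w A i0"
    and big: "card {j\<in>H. s3 P w A j} \<ge> bn + 1"
  shows "z P w A i j = sym P (w i0) j"
proof (cases "j = i")
  case True
  then show ?thesis unfolding z_def using newy_ok[OF i ni i0 big] by simp
next
  case False
  have jb: "j \<notin> bad A" using j H_iff by auto
  show ?thesis
  proof (cases "s3 P w A j")
    case True
    have "w j = w i0" using core[OF j i0(1) s3_s2[OF True] s3_s2[OF i0(2)]] .
    then show ?thesis unfolding z_def recv1_def y_def using False True rs3_H[OF i j] jb by simp
  next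
    case nj: False
    have "\<not> rs3 P w A j i" using rs3_H[OF j i] ni by simp
    then have "recv4 P w A i j = newy P w A j" unfolding recv4_def using jb nj False by auto
    then show ?thesis unfolding z_def using False nj rs3_H[OF i j] newy_ok[OF j nj i0 big] by simp
  qed
qed

lemma out_ok:
  assumes i: "i \<in> H" and d: "ba_dec A i" and i0: "i0 \<in> H" "s3 P w A i0"
    and big: "card {j\<in>H. s3 P w A j} \<ge> bn + 1"
  shows "cool_output P w A i = Some (w i0)"
proof (cases "s3 P w A i")
  case True
  have "w i = w i0" using core[OF i i0(1) s3_s2[OF True] s3_s2[OF i0(2)]] .
  then show ?thesis unfolding cool_output_def using d True by simp
next
  case ni: False
  have l0: "length (w i0) = lP P" using inputs i0 by auto
  have ngt: "card H \<ge> n - t" using cardH bad_card by linarith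
  have dec0: "decodable P w A i (w i0)"
  proof -
    have "{j\<in>H. sym P (w i0) j = z P w A i j} = H" using z_ok[OF i ni _ i0 big] by auto
    then have "card H \<le> cnt P (\<lambda>j. sym P (w i0) j = z P w A i j)"
      using cnt_ge[of "\<lambda>j. sym P (w i0) j = z P w A i j"] by simp
    then show ?thesis unfolding decodable_def using l0 ngt by simp
  qed
  have uniq: "x = w i0" if dx: "decodable P w A i x" for x
  proof -
    define S1 where "S1 = {j\<in>procs P. sym P x j = z P w A i j}"
    define S2 where "S2 = {j\<in>procs P. sym P (w i0) j = z P w A i j}"
    have lx: "length x = lP P" using dx unfolding decodable_def by simp
    have c1: "card S1 \<ge> n - t" using dx unfolding decodable_def cnt_def S1_def by simp
    have c2: "card S2 \<ge> n - t" using dec0 unfolding decodable_def cnt_def S2_def by simp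
    have fin: "finite S1" "finite S2" unfolding S1_def S2_def using procs_fin by auto
    have "card (S1 \<union> S2) \<le> card (procs P)" using procs_fin unfolding S1_def S2_def by (intro card_mono) auto
    moreover have "card (procs P) = n" unfolding procs_def by simp
    moreover have "card (S1 \<union> S2) + card (S1 \<inter> S2) = card S1 + card S2" using card_Un_Int[OF fin] by simp
    ultimately have "card (S1 \<inter> S2) \<ge> kk P" using c1 c2 n_bound kk_m by simp
    moreover have "S1 \<inter> S2 \<subseteq> {1..n}" unfolding S1_def procs_def by auto
    moreover have "\<forall>j\<in>S1 \<inter> S2. sym P x j = sym P (w i0) j" unfolding S1_def S2_def by auto
    ultimately show ?thesis using rs_unique[OF alpha_inj kn beta_inj lx l0] by blast
  qed
  have "(SOME x. decodable P w A i x) = w i0"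
    using someI[of "decodable P w A i", OF dec0] uniq by blast
  then show ?thesis unfolding cool_output_def using d ni dec0 by auto
qed

end


theorem lemma2:
  fixes P :: "'f::{field,finite} cool_params"
    and A :: "'f cool_adv"
    and w :: "nat \<Rightarrow> bool list"
  assumes n_bound: "nP P \<ge> 3 * tP P + 1"
    and field_size: "CARD('f) = 2 ^ cc P"
    and alpha_inj: "inj_on (alpha P) {1..nP P}"
    and alpha_nz: "\<forall>i\<in>{1..nP P}. alpha P i \<noteq> 0"
    and beta_bij: "bij_betw (beta P) {xs. length xs = cc P} UNIV"
    and tieb_ok: "\<forall>S. S \<noteq> {} \<longrightarrow> tieb P S \<in> S"
    and bad_sub: "bad A \<subseteq> {1..nP P}"
    and bad_card: "card (bad A) \<le> tP P"
    and inputs: "\<forall>i\<in>honest P A. length (w i) = lP P"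
    and ba: "ba_ok P w A"
  shows "(\<forall>i\<in>honest P A. \<forall>j\<in>honest P A. cool_output P w A i = cool_output P w A j)
       \<and> (\<forall>m. (\<forall>i\<in>honest P A. w i = m) \<longrightarrow> (\<forall>i\<in>honest P A. cool_output P w A i = Some m))"
proof -
  interpret coolc P A w
    using assms bij_betw_imp_inj_on[OF beta_bij] by unfold_locales auto
  have ngt: "card H \<ge> n - t" using cardH bad_card by linarith
  have baA: "\<forall>i\<in>H. \<forall>j\<in>H. ba_dec A i = ba_dec A j"
    and baV: "\<And>b. (\<forall>i\<in>H. vote P w A i = b) \<Longrightarrow> (\<forall>i\<in>H. ba_dec A i = b)"
    using ba unfolding ba_ok_def by blast+
  have cons: "\<forall>i\<in>H. \<forall>j\<in>H. cool_output P w A i = cool_output P w A j"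
  proof (intro ballI)
    fix i j assume i: "i \<in> H" and j: "j \<in> H"
    show "cool_output P w A i = cool_output P w A j"
    proof (cases "ba_dec A i")
      case False
      then have "\<not> ba_dec A j" using baA i j by metis
      then show ?thesis using False unfolding cool_output_def by simp
    next
      case True
      then have dj: "ba_dec A j" using baA i j by metis
      obtain i1 where i1: "i1 \<in> H" "vote P w A i1"
      proof -
        have "\<exists>i1\<in>H. vote P w A i1"
        proof (rule ccontr)
          assume "\<not> (\<exists>i1\<in>H. vote P w A i1)"
          then have "\<forall>i\<in>H. vote P w A i = False" by blast
          then have "ba_dec A i = False" using baV i by blast
          with True show False by simp
        qed
        then show ?thesis using that by blast
      qed
      have big: "card {j\<in>H. s3 P w A j} \<ge> bn + 1" using vote_T3[OF i1] bad_card by linarith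
      have "{j\<in>H. s3 P w A j} \<noteq> {}"
      proof
        assume "{j\<in>H. s3 P w A j} = {}"
        then have "card {j\<in>H. s3 P w A j} = 0" by (simp only: card.empty)
        then show False using big by linarith
      qed
      then obtain i0 where i0: "i0 \<in> H" "s3 P w A i0" by blast
      show ?thesis using out_ok[OF i True i0 big] out_ok[OF j dj i0 big] by simp
    qed
  qed
  have valid: "\<forall>mm. (\<forall>i\<in>H. w i = mm) \<longrightarrow> (\<forall>i\<in>H. cool_output P w A i = Some mm)"
  proof (intro allI impI ballI)
    fix mm i assume all: "\<forall>i\<in>H. w i = mm" and i: "i \<in> H"
    have adjall: "adj a b" if "a \<in> H" "b \<in> H" for a b
      using all that unfolding adj_def by simp
    have s1all: "s1 P w A a" if a: "a \<in> H" for a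
    proof -
      have "{j\<in>H. u1 P w A a j} = H" using u1_H[OF a] adjall[OF a] by auto
      then show ?thesis unfolding s1_def using cnt_ge[of "u1 P w A a"] ngt by simp
    qed
    have s2all: "s2 P w A a" if a: "a \<in> H" for a
    proof -
      have "{j\<in>H. u2 P w A a j} = H" using u2_H[OF a _ s1all[OF a]] adjall[OF a] s1all by auto
      then show ?thesis unfolding s2_def using cnt_ge[of "u2 P w A a"] ngt s1all[OF a] by simp
    qed
    have s3all: "s3 P w A a" if a: "a \<in> H" for a
    proof -
      have "{j\<in>H. u3 P w A a j} = H"
        using u3_H[OF a _ s2all[OF a]] u2_H[OF a _ s1all[OF a]] adjall[OF a] s1all s2all by auto
      then show ?thesis unfolding s3_def using cnt_ge[of "u3 P w A a"] ngt s2all[OF a] by simp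
    qed
    have vall: "\<forall>a\<in>H. vote P w A a = True"
    proof
      fix a assume a: "a \<in> H"
      have "{j\<in>H. rs3 P w A a j} = H" using rs3_H[OF a] s3all by auto
      then have "card H \<le> cnt P (rs3 P w A a)" using cnt_ge[of "rs3 P w A a"] by simp
      then show "vote P w A a = True" unfolding vote_def using ngt n_bound by simp
    qed
    have "ba_dec A i" using baV[OF vall] i by simp
    then show "cool_output P w A i = Some mm" unfolding cool_output_def using s3all[OF i] all i by simp
  qed
  show ?thesis using cons valid by blast
qed


end
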